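(* Let $x,h$ be real numbers with $0\le x<x+h<1$, and write $x=\sum_{k\ge1}2^{-k}\varepsilon_k$, $x+h=\sum_{k\ge1}2^{-k}\varepsilon'_k$ with $\varepsilon_k,\varepsilon'_k\in\{0,1\}$, where for dyadic rationals the expansion that is eventually all zeros is chosen. Let $p$ be the nonnegative integer with $2^{-p-1}<h\le 2^{-p}$, and let $k_0:=\max\{k:\varepsilon_1=\varepsilon'_1,\dots,\varepsilon_k=\varepsilon'_k\}$ (with $k_0=0$ if $\varepsilon_1\ne\varepsilon'_1$). Assume $k_0<p$. Then $$\sum_{k=p+1}^\infty 2^{-k}(1-\varepsilon_k-\varepsilon'_k)\le h.$$ Moreover, if $m\ge0$ is an integer with $\varepsilon_{p+m+1}=0$, then $$\sum_{k=p+1}^\infty 2^{-k}(1-\varepsilon_k-\varepsilon'_k)\ge -h(1-2^{-m}).$$ *)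

theory Defs
  imports Complex_Main
begin

text \<open>k-th binary digit (k \<ge> 1) of a real x in [0,1), using the expansion that is
  eventually zero for dyadic rationals: eps_k = floor(2^k x) mod 2.\<close>
definition bdigit :: "nat \<Rightarrow> real \<Rightarrow> int" where
  "bdigit k x = \<lfloor>2 ^ k * x\<rfloor> mod 2"

definition common_prefix :: "real \<Rightarrow> real \<Rightarrow> nat" where
  "common_prefix x y = (GREATEST k. \<forall>j\<in>{1..k}. bdigit j x = bdigit j y)"

end

theory Submission
  imports Defs
begin

lemma fl_step: "\<lfloor>2^(Suc j) * y\<rfloor> = 2 * \<lfloor>2^j * (y::real)\<rfloor> + bdigit (Suc j) y"
proof -
  define z where "z = 2^j*y"
  have e: "2^(Suc j)*y = 2*z" by (simp add: z_def)
  have "\<lfloor>2*z\<rfloor> div 2 = \<lfloor>z\<rfloor>"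
  proof -
    have "2*\<lfloor>z\<rfloor> \<le> \<lfloor>2*z\<rfloor>" by linarith
    moreover have "\<lfloor>2*z\<rfloor> \<le> 2*\<lfloor>z\<rfloor>+1" by linarith
    ultimately show ?thesis by linarith
  qed
  then show ?thesis unfolding bdigit_def e z_def[symmetric] by (metis mult_div_mod_eq)
qed

lemma fl_div: "\<lfloor>2^j * (y::real)\<rfloor> = \<lfloor>2^(Suc j) * y\<rfloor> div 2"
proof -
  have "bdigit (Suc j) y \<in> {0,1}" unfolding bdigit_def by auto
  then show ?thesis using fl_step[of j y] by auto
qed

lemma partial:
  "(\<Sum>k<n. (1/2)^(k+p+1) * real_of_int (bdigit (k+p+1) y))
     = real_of_int \<lfloor>2^(p+n) * y\<rfloor> / 2^(p+n) - real_of_int \<lfloor>2^p * y\<rfloor> / 2^p"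
proof (induction n)
  case 0 then show ?case by simp
next
  case (Suc n)
  have st: "real_of_int \<lfloor>2^(Suc (p+n)) * y\<rfloor> = 2 * real_of_int \<lfloor>2^(p+n) * y\<rfloor> + real_of_int (bdigit (n+p+1) y)"
    using fl_step[of "p+n" y] by (simp add: add.commute)
  have "(\<Sum>k<Suc n. (1/2)^(k+p+1) * real_of_int (bdigit (k+p+1) y))
     = real_of_int \<lfloor>2^(p+n) * y\<rfloor> / 2^(p+n) - real_of_int \<lfloor>2^p * y\<rfloor> / 2^p
       + (1/2)^(n+p+1) * real_of_int (bdigit (n+p+1) y)" using Suc by simp
  also have "\<dots> = real_of_int \<lfloor>2^(p+Suc n) * y\<rfloor> / 2^(p+Suc n) - real_of_int \<lfloor>2^p * y\<rfloor> / 2^p"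
    using st by (simp add: field_simps power_add)
  finally show ?case .
qed

lemma fl_lim: "(\<lambda>n. real_of_int \<lfloor>2^n * y\<rfloor> / 2^n) \<longlonglongrightarrow> (y::real)"
proof (rule real_tendsto_sandwich[where f="\<lambda>n. y - (1/2)^n" and h="\<lambda>n. y"])
  show "\<forall>\<^sub>F n in sequentially. y - (1/2)^n \<le> real_of_int \<lfloor>2^n * y\<rfloor> / 2^n"
  proof (rule always_eventually, rule allI)
    fix n :: nat
    have "2^n * y - 1 \<le> real_of_int \<lfloor>2^n * y\<rfloor>" by linarith
    then have "(2^n * y - 1) / 2^n \<le> real_of_int \<lfloor>2^n * y\<rfloor> / 2^n"
      by (simp add: divide_right_mono)
    moreover have "(2^n * y - 1) / 2^n = y - (1/2)^n"
      by (simp add: field_simps power_divide)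
    ultimately show "y - (1/2)^n \<le> real_of_int \<lfloor>2^n * y\<rfloor> / 2^n" by simp
  qed
  show "\<forall>\<^sub>F n in sequentially. real_of_int \<lfloor>2^n * y\<rfloor> / 2^n \<le> y"
  proof (rule always_eventually, rule allI)
    fix n :: nat
    have "real_of_int \<lfloor>2^n * y\<rfloor> \<le> 2^n * y" by linarith
    then show "real_of_int \<lfloor>2^n * y\<rfloor> / 2^n \<le> y"
      by (simp add: field_simps)
  qed
  have "(\<lambda>n. (1/2::real)^n) \<longlonglongrightarrow> 0" by (rule LIMSEQ_power_zero) simp
  then show "(\<lambda>n. y - (1/2)^n) \<longlonglongrightarrow> y" using tendsto_diff[of "\<lambda>_. y" y sequentially] by force
  show "(\<lambda>n. y) \<longlonglongrightarrow> y" by simp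
qed

lemma digsum:
  "(\<lambda>k. (1/2)^(k+p+1) * real_of_int (bdigit (k+p+1) y)) sums
     (y - real_of_int \<lfloor>2^p * y\<rfloor> / 2^p)"
  unfolding sums_def partial
proof -
  have "(\<lambda>n. real_of_int \<lfloor>2^(n+p) * y\<rfloor> / 2^(n+p)) \<longlonglongrightarrow> y"
    using LIMSEQ_ignore_initial_segment[OF fl_lim, of p] .
  then have "(\<lambda>n. real_of_int \<lfloor>2^(p+n) * y\<rfloor> / 2^(p+n)) \<longlonglongrightarrow> y"
    by (simp add: add.commute)
  then show "(\<lambda>n. real_of_int \<lfloor>2^(p+n) * y\<rfloor> / 2^(p+n) - real_of_int \<lfloor>2^p * y\<rfloor> / 2^p)
     \<longlonglongrightarrow> y - real_of_int \<lfloor>2^p * y\<rfloor> / 2^p"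
    by (intro tendsto_intros)
qed

lemma geo: "(\<lambda>k. (1/2::real)^(k+p+1)) sums ((1/2)^p)"
proof -
  have "(\<lambda>k. (1/2)^(p+1) * (1/2::real)^k) sums ((1/2)^(p+1) * (1 / (1 - 1/2)))"
    by (intro sums_mult geometric_sums) simp
  then show ?thesis by (simp add: power_add mult.commute)
qed

lemma fl_down: "\<lfloor>2^(j+d) * (x::real)\<rfloor> = \<lfloor>2^(j+d) * (y::real)\<rfloor> \<Longrightarrow> \<lfloor>2^j * x\<rfloor> = \<lfloor>2^j * y\<rfloor>"
proof (induction d)
  case 0 then show ?case by simp
next
  case (Suc d)
  then show ?case using fl_div[of "j+d" x] fl_div[of "j+d" y] by simp
qed

lemma fl_up:
  assumes "0 \<le> x" "x < 1" "0 \<le> y" "y < 1" "\<forall>j\<in>{1..k}. bdigit j x = bdigit j y"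
  shows "\<lfloor>2^k * x\<rfloor> = \<lfloor>2^k * (y::real)\<rfloor>"
  using assms(5)
proof (induction k)
  case 0
  have "\<lfloor>x\<rfloor> = 0" "\<lfloor>y\<rfloor> = 0" using assms(1-4) by (simp_all add: floor_eq_iff)
  then show ?case by simp
next
  case (Suc k)
  then have "\<lfloor>2^k * x\<rfloor> = \<lfloor>2^k * (y::real)\<rfloor>" by auto
  moreover have "bdigit (Suc k) x = bdigit (Suc k) y" using Suc.prems by auto
  ultimately show ?case using fl_step[of k x] fl_step[of k y] by simp
qed

theorem lemma1:
  fixes x h :: real and p :: nat
  assumes "0 \<le> x" and "0 < h" and "x + h < 1"
    and "(1/2) ^ (p + 1) < h" and "h \<le> (1/2) ^ p"
    and "common_prefix x (x + h) < p"
  shows "(\<Sum>k. (1/2) ^ (k + p + 1) * (1 - real_of_int (bdigit (k + p + 1) x)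
                                         - real_of_int (bdigit (k + p + 1) (x + h)))) \<le> h
   \<and> (\<forall>m::nat. bdigit (p + m + 1) x = 0 \<longrightarrow>
       (\<Sum>k. (1/2) ^ (k + p + 1) * (1 - real_of_int (bdigit (k + p + 1) x)
                                    - real_of_int (bdigit (k + p + 1) (x + h))))
         \<ge> - h * (1 - (1/2) ^ m))"
proof -
  define a where "a = \<lfloor>2^p * x\<rfloor>"
  define b where "b = \<lfloor>2^p * (x+h)\<rfloor>"
  define P where "P = (\<lambda>k. \<forall>j\<in>{1..k}. bdigit j x = bdigit j (x+h))"
  have Pdown: "P k \<Longrightarrow> j \<le> k \<Longrightarrow> P j" for j k unfolding P_def by auto
  obtain K where K: "1/h < 2^K" using real_arch_pow[of "2::real" "1/h"] by auto
  have hK: "1 \<le> 2^K * h" using K assms(2) by (simp add: field_simps)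
  have notPK: "\<not> P K"
  proof
    assume "P K"
    then have "\<lfloor>2^K * x\<rfloor> = \<lfloor>2^K * (x+h)\<rfloor>"
      using fl_up[of x "x+h" K] assms(1-3) unfolding P_def by auto
    moreover have "2^K * (x+h) = 2^K*x + 2^K*h" by (simp add: algebra_simps)
    ultimately show False using hK by linarith
  qed
  have bnd: "\<forall>k. P k \<longrightarrow> k \<le> K"
  proof (intro allI impI, rule ccontr)
    fix k assume "P k" "\<not> k \<le> K"
    then show False using Pdown[of k K] notPK by auto
  qed
  have ab: "a \<noteq> b"
  proof
    assume "a = b"
    have "P p" unfolding P_def
    proof
      fix j assume j: "j \<in> {1..p}"
      then have "\<lfloor>2^(j+(p-j)) * x\<rfloor> = \<lfloor>2^(j+(p-j)) * (x+h)\<rfloor>"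
        using \<open>a = b\<close> unfolding a_def b_def by simp
      then have "\<lfloor>2^j * x\<rfloor> = \<lfloor>2^j * (x+h)\<rfloor>" by (rule fl_down)
      then show "bdigit j x = bdigit j (x+h)" unfolding bdigit_def by simp
    qed
    then have "p \<le> common_prefix x (x+h)"
      unfolding common_prefix_def P_def[symmetric] using bnd by (intro Greatest_le_nat) auto
    then show False using assms(6) by simp
  qed
  define t where "t = 2^p * h"
  have tpos: "1/2 < t" "t \<le> 1"
    using assms(4,5) unfolding t_def by (simp_all add: field_simps power_divide)
  have sh: "2^p*(x+h) = 2^p*x + t" by (simp add: t_def algebra_simps)
  have ba: "b = a + 1"
  proof -
    have "a \<le> 2^p*x" "2^p*x < a+1" "b \<le> 2^p*(x+h)" "2^p*(x+h) < b+1" unfolding a_def b_def by linarith+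
    then have "a \<le> b" "b \<le> a+1" using sh tpos by (simp_all add: a_def b_def floor_mono)
      (use sh tpos in linarith)+
    then show ?thesis using ab by simp
  qed
  define u where "u = 2^p*x - a"
  have u: "0 \<le> u" "u < 1" unfolding u_def a_def by linarith+
  have v: "0 \<le> u + t - 1" "u + t - 1 < 1"
    using ba sh unfolding u_def b_def by linarith+
  have S1: "(\<lambda>k. (1/2)^(k+p+1) * real_of_int (bdigit (k+p+1) x)) sums (u / 2^p)"
    using digsum[of p x] unfolding u_def a_def by (simp add: field_simps)
  have S2: "(\<lambda>k. (1/2)^(k+p+1) * real_of_int (bdigit (k+p+1) (x+h))) sums ((u + t - 1) / 2^p)"
  proof -
    have "x + h - real_of_int b / 2^p = (u+t-1)/2^p"
      unfolding u_def t_def ba by (simp add: field_simps)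
    then show ?thesis using digsum[of p "x+h"] unfolding b_def by simp
  qed
  have S: "(\<lambda>k. (1/2) ^ (k + p + 1) * (1 - real_of_int (bdigit (k + p + 1) x)
                                         - real_of_int (bdigit (k + p + 1) (x + h))))
     sums ((1/2)^p - u/2^p - (u+t-1)/2^p)"
    using sums_diff[OF sums_diff[OF geo[of p] S1] S2] by (simp add: right_diff_distrib)
  have Sv: "(\<Sum>k. (1/2) ^ (k + p + 1) * (1 - real_of_int (bdigit (k + p + 1) x)
                                         - real_of_int (bdigit (k + p + 1) (x + h))))
     = (2 - 2*u - t) / 2^p"
  proof -
    have "(1/2::real)^p = 1/2^p" by (simp add: power_divide)
    then have "(1/2::real)^p - u/2^p - (u+t-1)/2^p = (2 - 2*u - t) / 2^p"
      by (simp add: diff_divide_distrib[symmetric])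
    then show ?thesis using sums_unique[OF S] by simp
  qed
  have hh: "h = t / 2^p" unfolding t_def by simp
  show ?thesis
  proof
    show "(\<Sum>k. (1/2) ^ (k + p + 1) * (1 - real_of_int (bdigit (k + p + 1) x)
                                         - real_of_int (bdigit (k + p + 1) (x + h)))) \<le> h"
    proof -
      have "(2-2*u-t)/2^p \<le> t/2^p" using v by (intro divide_right_mono) auto
      then show ?thesis using Sv hh by simp
    qed
  next
    show "\<forall>m::nat. bdigit (p + m + 1) x = 0 \<longrightarrow>
       (\<Sum>k. (1/2) ^ (k + p + 1) * (1 - real_of_int (bdigit (k + p + 1) x)
                                    - real_of_int (bdigit (k + p + 1) (x + h))))
         \<ge> - h * (1 - (1/2) ^ m)"
    proof (intro allI impI)
      fix m :: nat
      assume d0: "bdigit (p + m + 1) x = 0"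
      have ub: "u \<le> 1 - (1/2)^(m+1)"
      proof (rule ccontr)
        assume "\<not> ?thesis"
        then have g: "2^(m+1) * u > 2^(m+1) - 1"
          by (simp add: field_simps power_divide)
        have "2^(m+1)*u < 2^(m+1)" using u by simp
        then have fu: "\<lfloor>2^(m+1)*u\<rfloor> = 2^(m+1) - 1" using g by (simp add: floor_eq_iff)
        have "2^(p+m+1)*x = of_int (a * 2^(m+1)) + 2^(m+1)*u"
          unfolding u_def by (simp add: algebra_simps power_add)
        then have "\<lfloor>2^(p+m+1)*x\<rfloor> = a * 2^(m+1) + (2^(m+1) - 1)"
          using fu by (metis floor_add_int add.commute)
        moreover have "a * 2^(m+1) + (2^(m+1) - 1) = 2 * (a * 2^m + 2^m - 1) + (1::int)"
          by (simp add: algebra_simps)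
        ultimately have "bdigit (p+m+1) x = (2 * (a * 2^m + 2^m - 1) + 1) mod 2"
          unfolding bdigit_def by (simp only:)
        moreover have "\<And>c::int. (2 * c + 1) mod 2 = 1" by presburger
        ultimately have "bdigit (p+m+1) x = 1" by metis
        then show False using d0 by simp
      qed
      have "t * (1/2)^m \<le> 2 - 2*u"
      proof -
        have "t * (1/2)^m \<le> (1/2)^m" using tpos by (simp add: mult_left_le_one_le)
        also have "\<dots> \<le> 2 - 2*u" using ub by simp
        finally show ?thesis .
      qed
      then have "- t * (1 - (1/2)^m) \<le> 2 - 2*u - t" by (simp add: algebra_simps)
      then have "- t * (1 - (1/2)^m) / 2^p \<le> (2 - 2*u - t) / 2^p" by (intro divide_right_mono) auto
      then have "- h * (1 - (1/2)^m) \<le> (2 - 2*u - t) / 2^p" unfolding hh by simp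
      then show "- h * (1 - (1/2)^m) \<le> (\<Sum>k. (1/2) ^ (k + p + 1) * (1 - real_of_int (bdigit (k + p + 1) x)
                                    - real_of_int (bdigit (k + p + 1) (x + h))))" using Sv by simp
    qed
  qed
qed

end
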